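(* Let $d$ be a positive integer and let $A\in\mathbb{R}^{[2]\times[n]}$ be a matrix that cannot be eliminated at any column. Then there exists $b\in\mathbb{R}^{[2]}$ such that the solution graph $G(R(A,b))$ is not connected.
   Context: Fix a positive integer $d$ and let $D=\{0,1,\dots,d\}$; $[n]=\{1,\dots,n\}$. For $A\in\mathbb{R}^{[m]\times[n]}$ and $b\in\mathbb{R}^{[m]}$, $R(A,b)=\{x\in D^{[n]} : Ax\ge b\}$. For $R\subseteq D^{[n]}$, the solution graph $G(R)$ is the undirected graph with vertex set $R$ in which $x,y$ are adjacent iff they differ in exactly one coordinate. A matrix $A=(a_{ij})\in\mathbb{R}^{[m]\times[n]}$ can be eliminated at column $j\in[n]$ if (i) for every row $i$ with $a_{ij}>0$ we have $a_{ij'}=0$ for all $j'\in[n]\setminus\{j\}$, or (ii) for every row $i$ with $a_{ij}<0$ we have $a_{ij'}=0$ for all $j'\in[n]\setminus\{j\}$. *)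

theory Defs
  imports Complex_Main
begin

text \<open>Points of D^[n] with D = {0..d}: functions nat => nat whose values on {1..n}
  lie in {0..d} and which vanish outside {1..n} (extensional representation).\<close>
definition Dpts :: "nat \<Rightarrow> nat \<Rightarrow> (nat \<Rightarrow> nat) set" where
  "Dpts d n = {x. (\<forall>i\<in>{1..n}. x i \<le> d) \<and> (\<forall>i. i \<notin> {1..n} \<longrightarrow> x i = 0)}"

definition Rsol :: "nat \<Rightarrow> nat \<Rightarrow> nat \<Rightarrow> (nat \<Rightarrow> nat \<Rightarrow> real) \<Rightarrow> (nat \<Rightarrow> real) \<Rightarrow> (nat \<Rightarrow> nat) set" where
  "Rsol d m n A b = {x \<in> Dpts d n. \<forall>i\<in>{1..m}. (\<Sum>j=1..n. A i j * real (x j)) \<ge> b i}"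

definition adjacent :: "nat \<Rightarrow> (nat \<Rightarrow> nat) \<Rightarrow> (nat \<Rightarrow> nat) \<Rightarrow> bool" where
  "adjacent n x y \<longleftrightarrow> card {j\<in>{1..n}. x j \<noteq> y j} = 1"

definition sol_edges :: "nat \<Rightarrow> (nat \<Rightarrow> nat) set \<Rightarrow> ((nat \<Rightarrow> nat) \<times> (nat \<Rightarrow> nat)) set" where
  "sol_edges n R = {(x, y). x \<in> R \<and> y \<in> R \<and> adjacent n x y}"

definition sol_graph_connected :: "nat \<Rightarrow> (nat \<Rightarrow> nat) set \<Rightarrow> bool" where
  "sol_graph_connected n R \<longleftrightarrow> (\<forall>x\<in>R. \<forall>y\<in>R. (x, y) \<in> (sol_edges n R)\<^sup>*)"

definition can_eliminate :: "nat \<Rightarrow> nat \<Rightarrow> (nat \<Rightarrow> nat \<Rightarrow> real) \<Rightarrow> nat \<Rightarrow> bool" where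
  "can_eliminate m n A j \<longleftrightarrow>
     (\<forall>i\<in>{1..m}. A i j > 0 \<longrightarrow> (\<forall>j'\<in>{1..n} - {j}. A i j' = 0)) \<or>
     (\<forall>i\<in>{1..m}. A i j < 0 \<longrightarrow> (\<forall>j'\<in>{1..n} - {j}. A i j' = 0))"

end

theory Submission
  imports Defs
begin

theorem lemma3:
  fixes d n :: nat and A :: "nat \<Rightarrow> nat \<Rightarrow> real"
  assumes "d \<ge> 1"
    and "n \<ge> 1"
    and "\<forall>j\<in>{1..n}. \<not> can_eliminate 2 n A j"
  shows "\<exists>b :: nat \<Rightarrow> real. \<not> sol_graph_connected n (Rsol d 2 n A b)"
proof -
  define a where "a j = A 1 j" for j
  define c where "c j = A 2 j" for j
  have two: "{1..2::nat} = {1,2}" by auto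
  have nz: "a j * c j < 0" if "j \<in> {1..n}" for j
  proof -
    have ne: "\<not> can_eliminate 2 n A j" using assms(3) that by blast
    then obtain i1 i2 where i: "i1 \<in> {1,2}" "A i1 j > 0" "i2 \<in> {1,2}" "A i2 j < 0"
      unfolding can_eliminate_def two by blast
    show ?thesis
    proof (cases "i1 = 1")
      case True
      then have "i2 = 2" using i by auto
      then show ?thesis using i True a_def c_def by (simp add: mult_pos_neg)
    next
      case False
      then have "i1 = 2" "i2 = 1" using i by auto
      then show ?thesis using i a_def c_def by (simp add: mult_neg_pos)
    qed
  qed
  have exj1: "\<exists>j1\<in>{1..n}. j1 \<noteq> 1"
  proof -
    have "1 \<in> {1..n}" using assms(2) by simp
    then have ne: "\<not> can_eliminate 2 n A 1" using assms(3) by blast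
    then obtain i1 j1 where "j1 \<in> {1..n} - {1}"
      unfolding can_eliminate_def two by blast
    then show ?thesis by blast
  qed
  define S where "S = {(j,k). j \<in> {1..n} \<and> k \<in> {1..n} \<and> j \<noteq> k}"
  have finS: "finite S" unfolding S_def
    by (rule finite_subset[of _ "{1..n} \<times> {1..n}"]) auto
  have neS: "S \<noteq> {}"
  proof -
    obtain j1 where "j1 \<in> {1..n}" "j1 \<noteq> 1" using exj1 by blast
    then have "(1, j1) \<in> S" using assms(2) unfolding S_def by auto
    then show ?thesis by blast
  qed
  define h where "h pq = \<bar>a (fst pq)\<bar> + \<bar>a (snd pq)\<bar>" for pq
  define m where "m = Min (h ` S)"
  have "m \<in> h ` S" unfolding m_def using finS neS by (intro Min_in) auto
  then obtain p q where pqS: "(p,q) \<in> S" and hm: "h (p,q) = m" by auto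
  have mle: "\<bar>a p\<bar> + \<bar>a q\<bar> \<le> \<bar>a j\<bar> + \<bar>a k\<bar>" if "(j,k) \<in> S" for j k
  proof -
    have "m \<le> h (j,k)" unfolding m_def using finS that by (intro Min_le) auto
    then show ?thesis using hm h_def by simp
  qed
  have p: "p \<in> {1..n}" and q: "q \<in> {1..n}" and pq: "p \<noteq> q" using pqS S_def by auto
  define xs where "xs j = (if j \<in> {1..n} \<and> a j > 0 then d else 0)" for j
  define F where "F i x = (\<Sum>j=1..n. A i j * real (x j))" for i x
  have xsD: "xs \<in> Dpts d n" unfolding Dpts_def xs_def by auto
  have fa: "F 1 xs - F 1 x = (\<Sum>j=1..n. \<bar>a j\<bar> * \<bar>real (x j) - real (xs j)\<bar>)"
    if "x \<in> Dpts d n" for x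
  proof -
    have "F 1 xs - F 1 x = (\<Sum>j=1..n. A 1 j * real (xs j) - A 1 j * real (x j))"
      unfolding F_def by (simp add: sum_subtractf)
    also have "\<dots> = (\<Sum>j=1..n. \<bar>a j\<bar> * \<bar>real (x j) - real (xs j)\<bar>)"
    proof (rule sum.cong)
      fix j assume j: "j \<in> {1..n}"
      have xd: "x j \<le> d" using that j unfolding Dpts_def by auto
      have "a j \<noteq> 0" using nz[OF j] by auto
      then consider "a j > 0" | "a j < 0" by linarith
      then show "A 1 j * real (xs j) - A 1 j * real (x j) = \<bar>a j\<bar> * \<bar>real (x j) - real (xs j)\<bar>"
      proof cases
        case 1
        then show ?thesis using j xd unfolding xs_def a_def by (simp add: algebra_simps)
      next
        case 2
        then show ?thesis using j xd unfolding xs_def a_def by (simp add: algebra_simps)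
      qed
    qed simp
    finally show ?thesis .
  qed
  have fc: "F 2 x - F 2 xs = (\<Sum>j=1..n. \<bar>c j\<bar> * \<bar>real (x j) - real (xs j)\<bar>)"
    if "x \<in> Dpts d n" for x
  proof -
    have "F 2 x - F 2 xs = (\<Sum>j=1..n. A 2 j * real (x j) - A 2 j * real (xs j))"
      unfolding F_def by (simp add: sum_subtractf)
    also have "\<dots> = (\<Sum>j=1..n. \<bar>c j\<bar> * \<bar>real (x j) - real (xs j)\<bar>)"
    proof (rule sum.cong)
      fix j assume j: "j \<in> {1..n}"
      have xd: "x j \<le> d" using that j unfolding Dpts_def by auto
      have "a j * c j < 0" using nz[OF j] by auto
      then consider "a j > 0" "c j < 0" | "a j < 0" "c j > 0"
        by (metis mult_neg_neg mult_nonneg_nonneg mult_nonpos_nonpos linorder_neqE_linordered_idom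
            less_eq_real_def not_less)
      then show "A 2 j * real (x j) - A 2 j * real (xs j) = \<bar>c j\<bar> * \<bar>real (x j) - real (xs j)\<bar>"
      proof cases
        case 1
        then show ?thesis using j xd unfolding xs_def c_def by (simp add: algebra_simps)
      next
        case 2
        then show ?thesis using j xd unfolding xs_def c_def by (simp add: algebra_simps)
      qed
    qed simp
    finally show ?thesis .
  qed
  define b where "b (i::nat) = (if i = 1 then F 1 xs - max \<bar>a p\<bar> \<bar>a q\<bar> else F 2 xs + min \<bar>c p\<bar> \<bar>c q\<bar>)" for i
  define R where "R = Rsol d 2 n A b"
  have inR: "x \<in> R \<longleftrightarrow> x \<in> Dpts d n \<and> F 1 x \<ge> b 1 \<and> F 2 x \<ge> b 2" for x
    unfolding R_def Rsol_def F_def two by auto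
  define supp where "supp x = {j\<in>{1..n}. x j \<noteq> xs j}" for x
  have cp: "c p \<noteq> 0" "c q \<noteq> 0" "a p \<noteq> 0" "a q \<noteq> 0"
    using nz[OF p] nz[OF q] by auto
  have suppR: "\<exists>j. supp x = {j}" if "x \<in> R" for x
  proof -
    have xD: "x \<in> Dpts d n" and f1: "F 1 x \<ge> b 1" and f2: "F 2 x \<ge> b 2"
      using that inR by auto
    have "x \<noteq> xs"
    proof
      assume "x = xs"
      then show False using f2 cp unfolding b_def by (simp add: min_def split: if_splits)
    qed
    then obtain j where "x j \<noteq> xs j" by blast
    then have j: "j \<in> supp x" 
    proof -
      have "j \<in> {1..n}"
      proof (rule ccontr)
        assume "j \<notin> {1..n}"
        then have "x j = 0" "xs j = 0" using xD xsD unfolding Dpts_def by auto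
        then show False using \<open>x j \<noteq> xs j\<close> by simp
      qed
      then show ?thesis using \<open>x j \<noteq> xs j\<close> unfolding supp_def by simp
    qed
    have uniq: "k = j" if k: "k \<in> supp x" for k
    proof (rule ccontr)
      assume kj: "k \<noteq> j"
      have jk: "j \<in> {1..n}" "k \<in> {1..n}" "x j \<noteq> xs j" "x k \<noteq> xs k"
        using j k unfolding supp_def by auto
      have t1: "\<bar>real (x i) - real (xs i)\<bar> \<ge> 1" if "x i \<noteq> xs i" for i
        using that by (cases "x i < xs i") (auto simp: abs_if)
      have t2: "\<bar>u\<bar> \<le> \<bar>u\<bar> * v" if "1 \<le> v" for u v :: real
        using mult_left_mono[OF that, of "\<bar>u\<bar>"] by simp
      have "\<bar>a p\<bar> + \<bar>a q\<bar> \<le> \<bar>a j\<bar> + \<bar>a k\<bar>"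
        using mle[of j k] jk kj unfolding S_def by auto
      also have "\<dots> \<le> \<bar>a j\<bar> * \<bar>real (x j) - real (xs j)\<bar> + \<bar>a k\<bar> * \<bar>real (x k) - real (xs k)\<bar>"
        using t1[OF jk(3)] t1[OF jk(4)]
        by (intro add_mono t2)
      also have "\<dots> = (\<Sum>i\<in>{j,k}. \<bar>a i\<bar> * \<bar>real (x i) - real (xs i)\<bar>)"
        using kj by simp
      also have "\<dots> \<le> (\<Sum>i=1..n. \<bar>a i\<bar> * \<bar>real (x i) - real (xs i)\<bar>)"
        using jk by (intro sum_mono2) auto
      also have "\<dots> = F 1 xs - F 1 x" using fa[OF xD] by simp
      also have "\<dots> \<le> max \<bar>a p\<bar> \<bar>a q\<bar>" using f1 unfolding b_def by simp
      finally show False using cp by (simp add: max_def split: if_splits)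
    qed
    have "supp x = {j}" using j uniq by blast
    then show ?thesis by blast
  qed
  have path: "supp y = supp x" if "(x,y) \<in> (sol_edges n R)\<^sup>*" "x \<in> R" for x y
    using that(1)
  proof (induction rule: rtrancl_induct)
    case base then show ?case by simp
  next
    case (step y z)
    have yz: "y \<in> R" "z \<in> R" "adjacent n y z" using step(2) unfolding sol_edges_def by auto
    obtain u where u: "supp y = {u}" using suppR yz(1) by blast
    obtain v where v: "supp z = {v}" using suppR yz(2) by blast
    show ?case
    proof (cases "u = v")
      case True then show ?thesis using u v step(3) by simp
    next
      case False
      have "u \<in> {j\<in>{1..n}. y j \<noteq> z j}" "v \<in> {j\<in>{1..n}. y j \<noteq> z j}"
      proof -
        have "u \<in> supp y" "u \<notin> supp z" "v \<in> supp z" "v \<notin> supp y" using u v False by auto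
        then show "u \<in> {j\<in>{1..n}. y j \<noteq> z j}" "v \<in> {j\<in>{1..n}. y j \<noteq> z j}"
          unfolding supp_def by auto
      qed
      then have "card {j\<in>{1..n}. y j \<noteq> z j} \<ge> card {u,v}"
        by (intro card_mono) auto
      then show ?thesis using False yz(3) unfolding adjacent_def by simp
    qed
  qed
  have single: "xs(r := (if xs r = 0 then 1 else d - 1)) \<in> R \<and>
      supp (xs(r := (if xs r = 0 then 1 else d - 1))) = {r}"
    if r: "r = p \<or> r = q" for r
  proof -
    define y where "y = xs(r := (if xs r = 0 then 1 else d - 1))"
    have rn: "r \<in> {1..n}" using r p q by auto
    have xsr: "xs r \<le> d" using xsD rn unfolding Dpts_def by auto
    have yD: "y \<in> Dpts d n" using xsD rn assms(1) unfolding y_def Dpts_def by auto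
    have dif: "\<bar>real (y j) - real (xs j)\<bar> = (if j = r then 1 else 0)" for j
      using xsr assms(1) unfolding y_def xs_def by auto
    have s1: "F 1 xs - F 1 y = \<bar>a r\<bar>"
      using fa[OF yD] rn by (simp add: dif if_distrib cong: if_cong)
    have s2: "F 2 y - F 2 xs = \<bar>c r\<bar>"
      using fc[OF yD] rn by (simp add: dif if_distrib cong: if_cong)
    have "y \<in> R" unfolding inR using yD s1 s2 r unfolding b_def by auto
    moreover have "supp y = {r}"
    proof -
      have "y j \<noteq> xs j \<longleftrightarrow> j = r" for j
        using xsr assms(1) unfolding y_def xs_def by auto
      then show ?thesis using rn unfolding supp_def by auto
    qed
    ultimately show ?thesis unfolding y_def by simp
  qed
  show ?thesis
  proof (intro exI[of _ b])
    show "\<not> sol_graph_connected n (Rsol d 2 n A b)"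
    proof
      assume "sol_graph_connected n (Rsol d 2 n A b)"
      then have "(xs(p := (if xs p = 0 then 1 else d - 1)), xs(q := (if xs q = 0 then 1 else d - 1)))
         \<in> (sol_edges n R)\<^sup>*"
        using single[of p] single[of q] unfolding sol_graph_connected_def R_def by blast
      moreover have "xs(p := (if xs p = 0 then 1 else d - 1)) \<in> R" using single[of p] by simp
      ultimately have "supp (xs(q := (if xs q = 0 then 1 else d - 1))) = supp (xs(p := (if xs p = 0 then 1 else d - 1)))"
        by (rule path)
      then have "{q} = {p}" using single[of p] single[of q] by simp
      then show False using pq by simp
    qed
  qed
qed

end
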